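(* Let $n\ge2$, $m\ge2$ be integers, let $\mathcal{V}=\mathcal{V}_1\otimes\dots\otimes\mathcal{V}_m$ be a tensor product of vector spaces over a field $\mathbb{F}$, let $\{x_a : a\in[n]\}$ be a multiset of product tensors with $x_a=x_{a,1}\otimes\dots\otimes x_{a,m}$, and let $d_j=\dim\operatorname{span}\{x_{a,j}:a\in[n]\}$ for $j\in[m]$. Let $r \in \{0,1,\dots, n\}$. If $n+r \leq \sum_{j=1}^m (d_j-1)+1$, then for any non-negative integer $\tilde{r} \leq r$ and multiset of product tensors $\{y_a : a \in [\tilde{r}]\}$ with $\sum_{a \in [n]} x_a = \sum_{a \in [\tilde{r}]} y_a$, there exist subsets $Q\subseteq[n]$, $R\subseteq[\tilde r]$ with $\max\{1,|R|\}\le |Q|\le n-1$ and $\sum_{a\in Q}x_a=\sum_{a\in R}y_a$. Moreover, if $n+r \leq \sum_{j=1}^m (d_j-1)+1$, $\tilde{r}=\operatorname{rank}[\sum_{a \in [n]} x_a]$, and $1\leq \tilde{r} \leq \min\{r,n-1\}$, then there exists a subset $S \subseteq [n]$ with $\tilde{r} \leq |S| \leq n-1$ for which $\operatorname{rank}[\sum_{a \in S} x_a] < \tilde{r}$.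
   Context: $[n]=\{1,\dots,n\}$, $[0]=\emptyset$ (an empty sum is $0$). A product tensor is a non-zero tensor $z_1\otimes\dots\otimes z_m$, $z_j\in\mathcal{V}_j$. $\operatorname{rank}$ denotes tensor rank: the minimum number of product tensors summing to the tensor. *)

theory Defs
  imports Complex_Main "HOL-Library.Function_Algebras"
begin

text \<open>A vector of the factor space is a function 'b => 'a (coordinates
w.r.t. a basis indexed by 'b; every vector space over 'a embeds in such a space).
A factor family z :: nat => 'b => 'a gives z j in V_j for j in {1..m}.
The tensor z_1 (x) ... (x) z_m is represented by its coordinate function on index
tuples i :: nat => 'b, namely i |-> prod_{j=1..m} z j (i j).\<close>

definition fscale :: "'a::field \<Rightarrow> ('b \<Rightarrow> 'a) \<Rightarrow> ('b \<Rightarrow> 'a)" where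
  "fscale c f = (\<lambda>x. c * f x)"

definition tprod :: "nat \<Rightarrow> (nat \<Rightarrow> 'b \<Rightarrow> 'a::field) \<Rightarrow> ((nat \<Rightarrow> 'b) \<Rightarrow> 'a)" where
  "tprod m z = (\<lambda>i. \<Prod>j\<in>{1..m}. z j (i j))"

definition is_ptensor :: "nat \<Rightarrow> (nat \<Rightarrow> 'b \<Rightarrow> 'a::field) \<Rightarrow> bool" where
  "is_ptensor m z \<longleftrightarrow> tprod m z \<noteq> 0"

definition trank :: "nat \<Rightarrow> ((nat \<Rightarrow> 'b) \<Rightarrow> 'a::field) \<Rightarrow> nat" where
  "trank m T = (LEAST k. \<exists>y :: nat \<Rightarrow> nat \<Rightarrow> 'b \<Rightarrow> 'a.
      (\<forall>a\<in>{1..k}. is_ptensor m (y a)) \<and> T = (\<Sum>a\<in>{1..k}. tprod m (y a)))"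

definition vdim :: "('b \<Rightarrow> 'a::field) set \<Rightarrow> nat" where
  "vdim S = vector_space.dim fscale S"

end

theory Submission
  imports Defs
begin



interpretation fs: vector_space "fscale :: 'a::field \<Rightarrow> ('b \<Rightarrow> 'a) \<Rightarrow> 'b \<Rightarrow> 'a"
  by unfold_locales (auto simp: fscale_def fun_eq_iff algebra_simps)

lemma vdim_fs: "vdim S = fs.dim S"
  by (simp add: vdim_def)

lemma fscale_apply[simp]: "fscale c f x = c * f x" by (simp add: fscale_def)

lemma dim_mono_fin:
  fixes V W :: "('b \<Rightarrow> 'a::field) set"
  assumes "V \<subseteq> fs.span W" "finite W"
  shows "fs.dim V \<le> fs.dim W"
proof -
  obtain B where B: "B \<subseteq> W" "fs.independent B" "W \<subseteq> fs.span B" "card B = fs.dim W"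
    by (rule fs.basis_exists)
  have "fs.span W \<subseteq> fs.span B" using B(3) by (simp add: fs.span_minimal)
  then have "V \<subseteq> fs.span B" using assms(1) by blast
  moreover have "finite B" using B(1) assms(2) finite_subset by blast
  ultimately have "fs.dim V \<le> card B" by (rule fs.dim_le_card)
  then show ?thesis using B(4) by simp
qed

lemma grassmann:
  fixes X Y :: "('b \<Rightarrow> 'a::field) set"
  assumes "finite X" "finite Y"
  shows "fs.dim (X \<union> Y) + fs.dim (fs.span X \<inter> fs.span Y) \<le> fs.dim X + fs.dim Y"
proof -
  let ?K = "fs.span X \<inter> fs.span Y"
  obtain C where C: "C \<subseteq> ?K" "fs.independent C" "?K \<subseteq> fs.span C" "card C = fs.dim ?K"
    by (rule fs.basis_exists)
  have CX: "C \<subseteq> fs.span X" "C \<subseteq> fs.span Y" using C(1) by auto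
  obtain D where D: "C \<subseteq> D" "D \<subseteq> fs.span X" "fs.independent D" "fs.span X \<subseteq> fs.span D"
    using fs.maximal_independent_subset_extend[OF CX(1) C(2)] by blast
  obtain E where E: "C \<subseteq> E" "E \<subseteq> fs.span Y" "fs.independent E" "fs.span Y \<subseteq> fs.span E"
    using fs.maximal_independent_subset_extend[OF CX(2) C(2)] by blast
  have fD: "finite D" using fs.independent_span_bound[OF assms(1) D(3) D(2)] by blast
  have fE: "finite E" using fs.independent_span_bound[OF assms(2) E(3) E(2)] by blast
  have cD: "card D = fs.dim X" using fs.basis_card_eq_dim[OF D(2) D(4) D(3)] by simp
  have cE: "card E = fs.dim Y" using fs.basis_card_eq_dim[OF E(2) E(4) E(3)] by simp
  have "X \<union> Y \<subseteq> fs.span (D \<union> E)"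
    using D(4) E(4) fs.span_superset[of X] fs.span_superset[of Y] fs.span_mono[of D "D \<union> E"]
      fs.span_mono[of E "D \<union> E"] by blast
  then have "fs.dim (X \<union> Y) \<le> card (D \<union> E)" using fD fE by (intro fs.dim_le_card) auto
  moreover have "card (D \<union> E) + card (D \<inter> E) = card D + card E" using card_Un_Int[OF fD fE] by simp
  moreover have "card C \<le> card (D \<inter> E)" using D(1) E(1) fD by (intro card_mono) auto
  ultimately show ?thesis using C(4) cD cE by linarith
qed

lemma dim_ge1:
  fixes X Y :: "('b \<Rightarrow> 'a::field) set"
  assumes "finite X" "v \<noteq> 0" "v \<in> fs.span X" "v \<in> fs.span Y"
  shows "1 \<le> fs.dim (fs.span X \<inter> fs.span Y)"
proof -
  let ?K = "fs.span X \<inter> fs.span Y"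
  obtain C where C: "C \<subseteq> ?K" "fs.independent C" "?K \<subseteq> fs.span C" "card C = fs.dim ?K"
    by (rule fs.basis_exists)
  have "finite C" using fs.independent_span_bound[OF assms(1) C(2)] C(1) by blast
  moreover have "C \<noteq> {}" using C(3) assms by auto
  ultimately have "0 < card C" by (simp add: card_gt_0_iff)
  then show ?thesis using C(4) by simp
qed

lemma basis_fam:
  fixes g :: "'i \<Rightarrow> 'b \<Rightarrow> 'a::field"
  assumes "finite Y"
  obtains B where "B \<subseteq> Y" "inj_on g B" "fs.independent (g ` B)" "fs.span (g ` B) = fs.span (g ` Y)"
    "fs.dim (g ` Y) = card B"
proof -
  obtain B0 where B0: "B0 \<subseteq> g ` Y" "fs.independent B0" "g ` Y \<subseteq> fs.span B0"
    by (rule fs.maximal_independent_subset)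
  obtain B where B: "B \<subseteq> Y" "inj_on g B" "B0 = g ` B" using subset_image_inj B0(1) by metis
  have sp1: "fs.span (g ` B) \<subseteq> fs.span (g ` Y)" using B(1) by (intro fs.span_mono) auto
  have sp2: "fs.span (g ` Y) \<subseteq> fs.span (g ` B)" using B0(3) B(3) fs.span_minimal[of "g ` Y" "fs.span B0"] by auto
  have sp: "fs.span (g ` B) = fs.span (g ` Y)" using sp1 sp2 by blast
  have "fs.dim (g ` Y) = fs.dim (fs.span (g ` Y))" by simp
  also have "\<dots> = fs.dim (fs.span (g ` B))" using sp by simp
  also have "\<dots> = card (g ` B)" using B0(2) B(3) by (simp add: fs.dim_eq_card_independent)
  also have "\<dots> = card B" using B(2) by (simp add: card_image)
  finally show ?thesis using that B B0(2) sp by blast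
qed

lemma span_fam:
  fixes z :: "'i \<Rightarrow> 'b \<Rightarrow> 'a::field"
  assumes "finite B" "inj_on z B" "v \<in> fs.span (z ` B)"
  obtains \<gamma> where "v = (\<Sum>b\<in>B. fscale (\<gamma> b) (z b))"
proof -
  obtain c where "v = (\<Sum>x\<in>z ` B. fscale (c x) x)"
    using assms fs.span_finite[of "z ` B"] by auto
  also have "\<dots> = (\<Sum>b\<in>B. fscale (c (z b)) (z b))"
    using sum.reindex[OF assms(2)] by simp
  finally show ?thesis using that[of "\<lambda>b. c (z b)"] by blast
qed

lemma indep_fam:
  fixes z :: "'i \<Rightarrow> 'b \<Rightarrow> 'a::field"
  assumes "finite B" "inj_on z B" "fs.independent (z ` B)"
    "(\<Sum>b\<in>B. fscale (\<gamma> b) (z b)) = 0" "b \<in> B"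
  shows "\<gamma> b = 0"
proof -
  let ?u = "\<lambda>v. \<gamma> (inv_into B z v)"
  have "(\<Sum>v\<in>z ` B. fscale (?u v) v) = (\<Sum>b\<in>B. fscale (?u (z b)) (z b))"
    using sum.reindex[OF assms(2)] by simp
  also have "\<dots> = (\<Sum>b\<in>B. fscale (\<gamma> b) (z b))"
    using assms(2) by (intro sum.cong) auto
  finally have "(\<Sum>v\<in>z ` B. fscale (?u v) v) = 0" using assms(4) by simp
  then have "\<forall>v\<in>z ` B. ?u v = 0" using fs.independentD[OF assms(3), of "z ` B" ?u] assms(1) by auto
  then have "?u (z b) = 0" using assms(5) by blast
  then show ?thesis using assms(2,5) by simp
qed




definition tens :: "nat \<Rightarrow> ('b \<Rightarrow> 'a) \<Rightarrow> ((nat \<Rightarrow> 'b) \<Rightarrow> 'a) \<Rightarrow> (nat \<Rightarrow> 'b) \<Rightarrow> 'a::field" where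
  "tens j0 u w = (\<lambda>i. u (i j0) * w i)"
definition indep_at :: "nat \<Rightarrow> ((nat \<Rightarrow> 'b) \<Rightarrow> 'a) \<Rightarrow> bool" where
  "indep_at j0 w \<longleftrightarrow> (\<forall>i c. w (i(j0:=c)) = w i)"
definition slice :: "nat \<Rightarrow> 'b \<Rightarrow> ((nat \<Rightarrow> 'b) \<Rightarrow> 'a) \<Rightarrow> (nat \<Rightarrow> 'b) \<Rightarrow> 'a" where
  "slice j0 \<beta> v = (\<lambda>i. v (i(j0:=\<beta>)))"
definition dslice :: "nat \<Rightarrow> (nat \<Rightarrow> 'b) \<Rightarrow> ((nat \<Rightarrow> 'b) \<Rightarrow> 'a) \<Rightarrow> 'b \<Rightarrow> 'a" where
  "dslice j0 i0 v = (\<lambda>\<beta>. v (i0(j0:=\<beta>)))"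
definition contr :: "nat \<Rightarrow> (('b \<Rightarrow> 'a) \<Rightarrow> 'a) \<Rightarrow> ((nat \<Rightarrow> 'b) \<Rightarrow> 'a) \<Rightarrow> (nat \<Rightarrow> 'b) \<Rightarrow> 'a" where
  "contr j0 f v = (\<lambda>i. f (dslice j0 i v))"
definition conn :: "'i set \<Rightarrow> ('i \<Rightarrow> 'c \<Rightarrow> 'a::field) \<Rightarrow> bool" where
  "conn Y z \<longleftrightarrow> (\<forall>S. S \<subseteq> Y \<longrightarrow> S \<noteq> {} \<longrightarrow> S \<noteq> Y \<longrightarrow> fs.span (z ` S) \<inter> fs.span (z ` (Y - S)) \<noteq> {0})"
definition linf :: "(('b \<Rightarrow> 'a) \<Rightarrow> 'a::field) \<Rightarrow> bool" where
  "linf f \<longleftrightarrow> (\<forall>x y. f (x + y) = f x + f y) \<and> (\<forall>c x. f (fscale c x) = c * f x)"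

lemma slice_tens: "indep_at j0 w \<Longrightarrow> slice j0 \<beta> (tens j0 u w) = fscale (u \<beta>) w"
  by (auto simp: slice_def tens_def indep_at_def fun_eq_iff)
lemma dslice_tens: "indep_at j0 w \<Longrightarrow> dslice j0 i0 (tens j0 u w) = fscale (w i0) u"
  by (auto simp: dslice_def tens_def indep_at_def fun_eq_iff mult.commute)
lemma contr_tens: "linf f \<Longrightarrow> indep_at j0 w \<Longrightarrow> contr j0 f (tens j0 u w) = fscale (f u) w"
  by (auto simp: contr_def dslice_tens linf_def fun_eq_iff)

lemma hom_zero:
  fixes h :: "('c \<Rightarrow> 'a::field) \<Rightarrow> ('d \<Rightarrow> 'a)"
  assumes "\<And>x y. h (x + y) = h x + h y"
  shows "h 0 = 0"
proof -
  have "h 0 = h (0 + 0)" by simp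
  also have "\<dots> = h 0 + h 0" by (rule assms)
  finally show ?thesis by simp
qed

lemma hom_sum:
  fixes h :: "('c \<Rightarrow> 'a::field) \<Rightarrow> ('d \<Rightarrow> 'a)"
  assumes "\<And>x y. h (x + y) = h x + h y"
  shows "h (\<Sum>q\<in>Q. g q) = (\<Sum>q\<in>Q. h (g q))"
proof (cases "finite Q")
  case True
  then show ?thesis
  proof (induction Q rule: finite_induct)
    case empty
    show ?case by (simp only: sum.empty hom_zero[OF assms])
  next
    case (insert x F)
    have "h (\<Sum>q\<in>insert x F. g q) = h (g x + (\<Sum>q\<in>F. g q))" using insert(1,2) by simp
    also have "\<dots> = h (g x) + (\<Sum>q\<in>F. h (g q))" using assms insert(3) by simp
    also have "\<dots> = (\<Sum>q\<in>insert x F. h (g q))" using insert(1,2) by simp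
    finally show ?case .
  qed
next
  case False
  then show ?thesis by (simp only: sum.infinite[OF False] hom_zero[OF assms])
qed

lemma hom_span:
  fixes h :: "('c \<Rightarrow> 'a::field) \<Rightarrow> ('d \<Rightarrow> 'a)"
  assumes add: "\<And>x y. h (x + y) = h x + h y"
    and sc: "\<And>c x. h (fscale c x) = fscale c (h x)"
    and v: "v \<in> fs.span X"
    and gen: "\<And>x. x \<in> X \<Longrightarrow> h x \<in> fs.span W"
  shows "h v \<in> fs.span W"
proof -
  have "fs.subspace {v. h v \<in> fs.span W}"
  proof (rule fs.subspaceI)
    show "0 \<in> {v. h v \<in> fs.span W}" using hom_zero[OF add] fs.span_zero by (metis mem_Collect_eq)
    show "x + y \<in> {v. h v \<in> fs.span W}" if "x \<in> {v. h v \<in> fs.span W}" "y \<in> {v. h v \<in> fs.span W}" for x y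
      using that add fs.span_add by auto
    show "fscale c x \<in> {v. h v \<in> fs.span W}" if "x \<in> {v. h v \<in> fs.span W}" for c x
      using that sc fs.span_scale by auto
  qed
  then show ?thesis using fs.span_induct[OF v, of "\<lambda>v. h v \<in> fs.span W"] gen by auto
qed

lemma slice_add: "slice j0 \<beta> (x + y) = slice j0 \<beta> x + slice j0 \<beta> y"
  by (simp add: slice_def fun_eq_iff)
lemma slice_scale: "slice j0 \<beta> (fscale c x) = fscale c (slice j0 \<beta> x)"
  by (simp add: slice_def fun_eq_iff)
lemma dslice_add: "dslice j0 i (x + y) = dslice j0 i x + dslice j0 i y"
  by (simp add: dslice_def fun_eq_iff)
lemma dslice_scale: "dslice j0 i (fscale c x) = fscale c (dslice j0 i x)"
  by (simp add: dslice_def fun_eq_iff)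
lemma contr_add: "linf f \<Longrightarrow> contr j0 f (x + y) = contr j0 f x + contr j0 f y"
  by (simp add: contr_def dslice_add linf_def fun_eq_iff)
lemma contr_scale: "linf f \<Longrightarrow> contr j0 f (fscale c x) = fscale c (contr j0 f x)"
  by (simp add: contr_def dslice_scale linf_def fun_eq_iff)

lemma slice_span:
  assumes "v \<in> fs.span ((\<lambda>a. tens j0 (u a) (w a)) ` S)" "\<forall>a\<in>S. indep_at j0 (w a)"
  shows "slice j0 \<beta> v \<in> fs.span (w ` S)"
  by (rule hom_span[OF slice_add slice_scale assms(1)])
     (use assms(2) in \<open>auto simp only: slice_tens image_iff intro!: fs.span_scale[OF fs.span_base]\<close>)

lemma dslice_span:
  assumes "v \<in> fs.span ((\<lambda>a. tens j0 (u a) (w a)) ` S)" "\<forall>a\<in>S. indep_at j0 (w a)"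
  shows "dslice j0 i v \<in> fs.span (u ` S)"
  by (rule hom_span[OF dslice_add dslice_scale assms(1)])
     (use assms(2) in \<open>auto simp only: dslice_tens image_iff intro!: fs.span_scale[OF fs.span_base]\<close>)

lemma contr_span:
  assumes "linf f" "v \<in> fs.span ((\<lambda>a. tens j0 (u a) (w a)) ` S)" "\<forall>a\<in>S. indep_at j0 (w a)"
  shows "contr j0 f v \<in> fs.span (w ` S)"
  by (rule hom_span[OF contr_add[OF assms(1)] contr_scale[OF assms(1)] assms(2)])
     (use assms in \<open>auto simp only: contr_tens image_iff intro!: fs.span_scale[OF fs.span_base]\<close>)

lemma conn_w:
  fixes u :: "'i \<Rightarrow> 'b \<Rightarrow> 'a::field" and w :: "'i \<Rightarrow> (nat \<Rightarrow> 'b) \<Rightarrow> 'a"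
  assumes c: "conn Y (\<lambda>a. tens j0 (u a) (w a))" and ind: "\<forall>a\<in>Y. indep_at j0 (w a)"
  shows "conn Y w"
  unfolding conn_def
proof (intro allI impI)
  fix S assume S: "S \<subseteq> Y" "S \<noteq> {}" "S \<noteq> Y"
  show "fs.span (w ` S) \<inter> fs.span (w ` (Y - S)) \<noteq> {0}"
  proof
    assume w0: "fs.span (w ` S) \<inter> fs.span (w ` (Y - S)) = {0}"
    let ?t = "\<lambda>a. tens j0 (u a) (w a)"
    have "fs.span (?t ` S) \<inter> fs.span (?t ` (Y - S)) \<subseteq> {0}"
    proof
      fix v assume v: "v \<in> fs.span (?t ` S) \<inter> fs.span (?t ` (Y - S))"
      have "\<forall>\<beta>. slice j0 \<beta> v = 0"
      proof
        fix \<beta>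
        have "slice j0 \<beta> v \<in> fs.span (w ` S)" using v ind S(1) by (intro slice_span) auto
        moreover have "slice j0 \<beta> v \<in> fs.span (w ` (Y - S))" using v ind by (intro slice_span) auto
        ultimately show "slice j0 \<beta> v = 0" using w0 by blast
      qed
      then have "v = 0"
      proof -
        assume h: "\<forall>\<beta>. slice j0 \<beta> v = 0"
        have "v i = 0" for i
        proof -
          have "slice j0 (i j0) v i = 0" using h by simp
          then show ?thesis by (simp add: slice_def)
        qed
        then show ?thesis by (simp add: fun_eq_iff)
      qed
      then show "v \<in> {0}" by simp
    qed
    then have "fs.span (?t ` S) \<inter> fs.span (?t ` (Y - S)) = {0}"
      using fs.span_zero by blast
    then show False using c S unfolding conn_def by blast
  qed
qed




interpretation fp: vector_space_pair "fscale :: 'a::field \<Rightarrow> ('b \<Rightarrow> 'a) \<Rightarrow> 'b \<Rightarrow> 'a" "(*) :: 'a \<Rightarrow> 'a \<Rightarrow> 'a"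
  by unfold_locales (auto simp: algebra_simps)

lemma dual_functional:
  fixes u :: "'i \<Rightarrow> 'b \<Rightarrow> 'a::field"
  assumes "inj_on u B" "fs.independent (u ` B)" "b \<in> B"
  obtains f where "linf f" "\<And>q. q \<in> B \<Longrightarrow> f (u q) = (if q = b then 1 else 0)"
proof -
  let ?f = "fp.construct (u ` B) (\<lambda>v. if v = u b then (1::'a) else 0)"
  have lin: "Vector_Spaces.linear fscale (*) ?f" by (rule fp.linear_construct[OF assms(2)])
  have "linf ?f" using lin unfolding linf_def Vector_Spaces.linear_iff by auto
  moreover have "?f (u q) = (if q = b then 1 else 0)" if "q \<in> B" for q
  proof -
    have "?f (u q) = (if u q = u b then 1 else 0)"
      using fp.construct_basis[OF assms(2)] that by blast
    also have "\<dots> = (if q = b then 1 else 0)" using assms(1,3) that by (auto dest: inj_onD)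
    finally show ?thesis .
  qed
  ultimately show ?thesis using that by blast
qed

lemma sylv:
  fixes u :: "'i \<Rightarrow> 'b \<Rightarrow> 'a::field" and w :: "'i \<Rightarrow> (nat \<Rightarrow> 'b) \<Rightarrow> 'a"
  assumes fQ: "finite Q" and fP: "finite P"
    and ind: "\<forall>q\<in>Q \<union> P. indep_at j0 (w q)"
    and c: "\<forall>q\<in>Q. c q \<noteq> 0"
    and M: "(\<Sum>q\<in>Q. fscale (c q) (tens j0 (u q) (w q))) \<in> fs.span ((\<lambda>a. tens j0 (u a) (w a)) ` P)"
  shows "fs.dim (u ` Q) + fs.dim (w ` Q) \<le> card Q + fs.dim (fs.span (w ` Q) \<inter> fs.span (w ` P))"
proof -
  let ?M = "\<Sum>q\<in>Q. fscale (c q) (tens j0 (u q) (w q))"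
  let ?K = "fs.span (w ` Q) \<inter> fs.span (w ` P)"
  obtain BQ where BQ: "BQ \<subseteq> Q" "inj_on u BQ" "fs.independent (u ` BQ)"
    "fs.span (u ` BQ) = fs.span (u ` Q)" "fs.dim (u ` Q) = card BQ"
    using basis_fam[OF fQ] by blast
  obtain CK where CK: "CK \<subseteq> ?K" "fs.independent CK" "?K \<subseteq> fs.span CK" "card CK = fs.dim ?K"
    by (rule fs.basis_exists)
  have fCK: "finite CK" using fs.independent_span_bound[OF _ CK(2), of "w ` Q"] CK(1) fQ by blast
  have fBQ: "finite BQ" using BQ(1) fQ finite_subset by blast
  let ?T = "w ` (Q - BQ) \<union> CK"
  have key: "w b \<in> fs.span ?T" if b: "b \<in> BQ" for b
  proof -
    obtain f where f: "linf f" "\<And>q. q \<in> BQ \<Longrightarrow> f (u q) = (if q = b then 1 else 0)"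
      using dual_functional[OF BQ(2) BQ(3) b] by blast
    let ?\<omega> = "contr j0 f ?M"
    have \<omega>eq: "?\<omega> = (\<Sum>q\<in>Q. fscale (c q) (fscale (f (u q)) (w q)))"
    proof -
      have "?\<omega> = (\<Sum>q\<in>Q. contr j0 f (fscale (c q) (tens j0 (u q) (w q))))"
        by (rule hom_sum[OF contr_add[OF f(1)]])
      also have "\<dots> = (\<Sum>q\<in>Q. fscale (c q) (fscale (f (u q)) (w q)))"
        using ind by (intro sum.cong refl) (simp add: contr_scale[OF f(1)] contr_tens[OF f(1)])
      finally show ?thesis .
    qed
    have split: "(\<Sum>q\<in>Q. fscale (c q) (fscale (f (u q)) (w q))) =
        (\<Sum>q\<in>BQ. fscale (c q) (fscale (f (u q)) (w q))) + (\<Sum>q\<in>Q - BQ. fscale (c q) (fscale (f (u q)) (w q)))"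
      using sum.subset_diff[OF BQ(1) fQ] by (simp add: add.commute)
    have "(\<Sum>q\<in>BQ. fscale (c q) (fscale (f (u q)) (w q))) = (\<Sum>q\<in>BQ. if q = b then fscale (c b) (w b) else 0)"
      using f(2) by (intro sum.cong refl) (auto simp: fscale_def)
    also have "\<dots> = fscale (c b) (w b)" using fBQ b by (simp add: sum.delta)
    finally have bq: "(\<Sum>q\<in>BQ. fscale (c q) (fscale (f (u q)) (w q))) = fscale (c b) (w b)" .
    let ?R = "\<Sum>q\<in>Q - BQ. fscale (c q) (fscale (f (u q)) (w q))"
    have \<omega>2: "?\<omega> = fscale (c b) (w b) + ?R" using \<omega>eq split bq by simp
    have R: "?R \<in> fs.span ?T"
      by (intro fs.span_sum fs.span_scale fs.span_base) auto
    have "?\<omega> \<in> fs.span (w ` P)"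
      using contr_span[OF f(1) M] ind by auto
    moreover have "?\<omega> \<in> fs.span (w ` Q)"
      unfolding \<omega>eq by (intro fs.span_sum fs.span_scale fs.span_base imageI) auto
    ultimately have "?\<omega> \<in> ?K" by blast
    then have "?\<omega> \<in> fs.span CK" using CK(3) by blast
    then have \<omega>T: "?\<omega> \<in> fs.span ?T" using fs.span_mono[of CK ?T] by blast
    have cb: "c b \<noteq> 0" using c b BQ(1) by auto
    have "?\<omega> - ?R = fscale (c b) (w b)" using \<omega>2 by simp
    then have "fscale (inverse (c b)) (?\<omega> - ?R) = w b" using cb by (simp add: fs.scale_scale)
    moreover have "fscale (inverse (c b)) (?\<omega> - ?R) \<in> fs.span ?T"
      by (rule fs.span_scale[OF fs.span_diff[OF \<omega>T R]])
    ultimately show ?thesis by simp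
  qed
  have "w ` Q \<subseteq> fs.span ?T"
  proof
    fix v assume "v \<in> w ` Q"
    then obtain q where q: "q \<in> Q" "v = w q" by blast
    show "v \<in> fs.span ?T"
    proof (cases "q \<in> BQ")
      case True then show ?thesis using key q by simp
    next
      case False then show ?thesis using q by (intro fs.span_base) auto
    qed
  qed
  then have "fs.dim (w ` Q) \<le> card ?T" using fQ fCK by (intro fs.dim_le_card) auto
  also have "\<dots> \<le> card (w ` (Q - BQ)) + card CK" by (rule card_Un_le)
  also have "\<dots> \<le> card (Q - BQ) + card CK" using card_image_le fQ by auto
  also have "\<dots> = card Q - card BQ + fs.dim ?K" using card_Diff_subset[OF fBQ BQ(1)] CK(4) by simp
  finally have "fs.dim (w ` Q) \<le> card Q - card BQ + fs.dim ?K" .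
  moreover have "card BQ \<le> card Q" using card_mono[OF fQ BQ(1)] .
  ultimately show ?thesis using BQ(5) by linarith
qed

lemma meet_nonzero:
  fixes u :: "'i \<Rightarrow> 'b \<Rightarrow> 'a::field" and w :: "'i \<Rightarrow> (nat \<Rightarrow> 'b) \<Rightarrow> 'a"
  assumes fQ: "finite Q"
    and ind: "\<forall>q\<in>Q \<union> P. indep_at j0 (w q)"
    and M: "(\<Sum>q\<in>Q. fscale (c q) (tens j0 (u q) (w q))) \<in> fs.span ((\<lambda>a. tens j0 (u a) (w a)) ` P)"
    and nz: "(\<Sum>q\<in>Q. fscale (c q) (tens j0 (u q) (w q))) \<noteq> 0"
  shows "1 \<le> fs.dim (fs.span (u ` Q) \<inter> fs.span (u ` P))"
proof -
  let ?M = "\<Sum>q\<in>Q. fscale (c q) (tens j0 (u q) (w q))"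
  obtain i0 where i0: "?M i0 \<noteq> 0" using nz by (auto simp: fun_eq_iff)
  let ?v = "dslice j0 i0 ?M"
  have vP: "?v \<in> fs.span (u ` P)" using dslice_span[OF M] ind by auto
  have MQ: "?M \<in> fs.span ((\<lambda>a. tens j0 (u a) (w a)) ` Q)"
    by (intro fs.span_sum fs.span_scale fs.span_base) auto
  have iQ: "\<forall>a\<in>Q. indep_at j0 (w a)" using ind by auto
  have vQ: "?v \<in> fs.span (u ` Q)" using dslice_span[OF MQ iQ] by blast
  have v0: "?v \<noteq> 0"
  proof
    assume "?v = 0"
    then have "?v (i0 j0) = 0" by simp
    then show False using i0 by (simp add: dslice_def)
  qed
  show ?thesis using dim_ge1[of "u ` Q" ?v "u ` P"] fQ vP vQ v0 by auto
qed




lemma span_split_zero: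
  fixes z :: "'i \<Rightarrow> 'c \<Rightarrow> 'a::field"
  assumes fB: "finite B" and inj: "inj_on z B" and ind: "fs.independent (z ` B)" and P: "P \<subseteq> B"
    and v1: "v \<in> fs.span (z ` P)" and v2: "v \<in> fs.span (z ` (B - P))"
  shows "v = 0"
proof -
  have fP: "finite P" using P fB finite_subset by blast
  obtain \<alpha> where \<alpha>: "v = (\<Sum>b\<in>P. fscale (\<alpha> b) (z b))"
    using span_fam[OF fP _ v1] inj P inj_on_subset by blast
  obtain \<beta> where \<beta>: "v = (\<Sum>b\<in>B - P. fscale (\<beta> b) (z b))"
    using span_fam[OF _ _ v2] fB inj inj_on_subset by blast
  let ?g = "\<lambda>b. if b \<in> P then \<alpha> b else - \<beta> b"
  have "(\<Sum>b\<in>B. fscale (?g b) (z b)) = (\<Sum>b\<in>P. fscale (?g b) (z b)) + (\<Sum>b\<in>B - P. fscale (?g b) (z b))"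
    using sum.subset_diff[OF P fB, of "\<lambda>b. fscale (?g b) (z b)"] by (simp only: add.commute)
  also have "(\<Sum>b\<in>P. fscale (?g b) (z b)) = v" unfolding \<alpha> by (intro sum.cong) auto
  also have "(\<Sum>b\<in>B - P. fscale (?g b) (z b)) = - v"
  proof -
    have "(\<Sum>b\<in>B - P. fscale (?g b) (z b)) = (\<Sum>b\<in>B - P. - fscale (\<beta> b) (z b))"
      by (intro sum.cong) (auto simp: fscale_def fun_eq_iff)
    also have "\<dots> = - v" unfolding \<beta> by (simp add: sum_negf)
    finally show ?thesis .
  qed
  finally have eq: "(\<Sum>b\<in>B. fscale (?g b) (z b)) = v + - v" .
  have "(\<Sum>b\<in>B. fscale (?g b) (z b)) = 0" unfolding eq by (rule add.right_inverse)
  then have "\<forall>b\<in>B. ?g b = 0" using indep_fam[OF fB inj ind, of ?g] by blast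
  then have "\<forall>b\<in>P. \<alpha> b = 0" using P by (metis subsetD)
  then show ?thesis unfolding \<alpha> by (simp add: fscale_def fun_eq_iff)
qed

lemma sum_supp:
  fixes z :: "'i \<Rightarrow> 'c \<Rightarrow> 'a::field"
  assumes "finite B" "G \<subseteq> B" "\<forall>b\<in>B - G. g b = 0"
  shows "(\<Sum>b\<in>B. fscale (g b) (z b)) = (\<Sum>b\<in>G. fscale (g b) (z b))"
  using assms by (intro sum.mono_neutral_right) (auto simp: fscale_def fun_eq_iff)




lemma straddle:
  fixes t :: "'i \<Rightarrow> 'c \<Rightarrow> 'a::field"
  assumes fY: "finite Y" and BY: "B \<subseteq> Y" and inj: "inj_on t B" and ind: "fs.independent (t ` B)"
    and rep: "\<forall>a\<in>Y. t a = (\<Sum>b\<in>B. fscale (gam a b) (t b))"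
    and cn: "conn Y t" and P: "P \<subseteq> B" "P \<noteq> {}" "P \<noteq> B"
  shows "\<exists>a\<in>Y - B. (\<exists>b\<in>P. gam a b \<noteq> 0) \<and> (\<exists>b\<in>B - P. gam a b \<noteq> 0)"
proof (rule ccontr)
  assume no: "\<not> ?thesis"
  have fB: "finite B" using BY fY finite_subset by blast
  define S where "S = P \<union> {a\<in>Y - B. \<forall>b\<in>B - P. gam a b = 0}"
  have S1: "t ` S \<subseteq> fs.span (t ` P)"
  proof
    fix v assume "v \<in> t ` S"
    then obtain a where a: "a \<in> S" "v = t a" by blast
    show "v \<in> fs.span (t ` P)"
    proof (cases "a \<in> P")
      case True then show ?thesis using a by (auto intro: fs.span_base)
    next
      case False
      then have a2: "a \<in> Y - B" "\<forall>b\<in>B - P. gam a b = 0" using a S_def by auto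
      have "t a = (\<Sum>b\<in>P. fscale (gam a b) (t b))"
        using rep a2 sum_supp[OF fB P(1), of "gam a" t] by auto
      also have "\<dots> \<in> fs.span (t ` P)" by (intro fs.span_sum fs.span_scale fs.span_base) auto
      finally show ?thesis using a by simp
    qed
  qed
  have S2: "t ` (Y - S) \<subseteq> fs.span (t ` (B - P))"
  proof
    fix v assume "v \<in> t ` (Y - S)"
    then obtain a where a: "a \<in> Y - S" "v = t a" by blast
    show "v \<in> fs.span (t ` (B - P))"
    proof (cases "a \<in> B")
      case True then have "a \<in> B - P" using a S_def by auto
      then show ?thesis using a by (auto intro: fs.span_base)
    next
      case False
      then have a2: "a \<in> Y - B" "\<exists>b\<in>B - P. gam a b \<noteq> 0" using a S_def by auto
      then have a3: "\<forall>b\<in>P. gam a b = 0" using no by blast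
      have "t a = (\<Sum>b\<in>B - P. fscale (gam a b) (t b))"
        using rep a2 a3 sum_supp[OF fB, of "B - P" "gam a" t] by auto
      also have "\<dots> \<in> fs.span (t ` (B - P))" by (intro fs.span_sum fs.span_scale fs.span_base) auto
      finally show ?thesis using a by simp
    qed
  qed
  have "fs.span (t ` S) \<inter> fs.span (t ` (Y - S)) \<subseteq> {0}"
  proof
    fix v assume v: "v \<in> fs.span (t ` S) \<inter> fs.span (t ` (Y - S))"
    have "v \<in> fs.span (t ` P)" using v fs.span_minimal[OF S1] by auto
    moreover have "v \<in> fs.span (t ` (B - P))" using v fs.span_minimal[OF S2] by auto
    ultimately have "v = 0" using span_split_zero[OF fB inj ind P(1)] by blast
    then show "v \<in> {0}" by simp
  qed
  then have eq0: "fs.span (t ` S) \<inter> fs.span (t ` (Y - S)) = {0}" using fs.span_zero by blast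
  have "S \<subseteq> Y" using S_def P BY by auto
  moreover have "S \<noteq> {}" using S_def P by auto
  moreover have "S \<noteq> Y"
  proof -
    obtain b0 where "b0 \<in> B" "b0 \<notin> P" using P by blast
    then have "b0 \<notin> S" "b0 \<in> Y" using S_def BY by auto
    then show ?thesis by blast
  qed
  ultimately show False using cn eq0 unfolding conn_def by blast
qed




lemma increment:
  fixes j0 :: nat and u :: "'i \<Rightarrow> 'b \<Rightarrow> 'a::field" and w :: "'i \<Rightarrow> (nat \<Rightarrow> 'b) \<Rightarrow> 'a"
  defines "t \<equiv> (\<lambda>a. tens j0 (u a) (w a))"
  assumes fY: "finite Y" and BY: "B \<subseteq> Y" and inj: "inj_on t B" and ind: "fs.independent (t ` B)"
    and rep: "\<forall>a\<in>Y. t a = (\<Sum>b\<in>B. fscale (gam a b) (t b))"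
    and ia: "\<forall>a\<in>Y. indep_at j0 (w a)"
    and P: "P \<subseteq> B" and good: "fs.dim (u ` P) + fs.dim (w ` P) \<le> card P + 1"
    and a: "a \<in> Y - B" and ab: "b1 \<in> P" "gam a b1 \<noteq> 0"
  shows "fs.dim (u ` (P \<union> {b\<in>B. gam a b \<noteq> 0})) + fs.dim (w ` (P \<union> {b\<in>B. gam a b \<noteq> 0}))
         \<le> card (P \<union> {b\<in>B. gam a b \<noteq> 0}) + 1"
proof -
  define G where "G = {b\<in>B. gam a b \<noteq> 0}"
  have fB: "finite B" using BY fY finite_subset by blast
  have GB: "G \<subseteq> B" and fG: "finite G" using G_def fB by auto
  have fP: "finite P" using P fB finite_subset by blast
  define Q where "Q = insert a (G - P)"
  define c where "c q = (if q = a then 1 else - gam a q)" for q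
  have aGP: "a \<notin> G - P" using a GB by auto
  have fQ: "finite Q" using Q_def fG by auto
  have cQ: "card Q = card (G - P) + 1" using Q_def aGP fG by simp
  have cPG: "card (P \<union> G) = card P + card (G - P)"
  proof -
    have e: "P \<union> G = P \<union> (G - P)" by blast
    have "card (P \<union> (G - P)) = card P + card (G - P)" using fP fG by (intro card_Un_disjoint) auto
    then show ?thesis by (subst e)
  qed
  have ta: "t a = (\<Sum>b\<in>G \<inter> P. fscale (gam a b) (t b)) + (\<Sum>b\<in>G - P. fscale (gam a b) (t b))"
  proof -
    have r1: "t a = (\<Sum>b\<in>B. fscale (gam a b) (t b))" using rep a by blast
    have r2: "(\<Sum>b\<in>B. fscale (gam a b) (t b)) = (\<Sum>b\<in>G. fscale (gam a b) (t b))"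
      using sum_supp[OF fB GB, of "gam a" t] G_def by blast
    have "t a = (\<Sum>b\<in>G. fscale (gam a b) (t b))" using r1 r2 by (rule trans)
    also have "\<dots> = (\<Sum>b\<in>(G \<inter> P) \<union> (G - P). fscale (gam a b) (t b))" by (rule sum.cong) auto
    also have "\<dots> = (\<Sum>b\<in>G \<inter> P. fscale (gam a b) (t b)) + (\<Sum>b\<in>G - P. fscale (gam a b) (t b))"
      using fG by (intro sum.union_disjoint) auto
    finally show ?thesis .
  qed
  have Meq: "(\<Sum>q\<in>Q. fscale (c q) (t q)) = (\<Sum>b\<in>G \<inter> P. fscale (gam a b) (t b))"
  proof -
    have "(\<Sum>q\<in>Q. fscale (c q) (t q)) = fscale (c a) (t a) + (\<Sum>q\<in>G - P. fscale (c q) (t q))"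
      unfolding Q_def using aGP fG by simp
    also have "fscale (c a) (t a) = t a" by (simp add: c_def fscale_def)
    also have "(\<Sum>q\<in>G - P. fscale (c q) (t q)) = - (\<Sum>b\<in>G - P. fscale (gam a b) (t b))"
    proof -
      have "(\<Sum>q\<in>G - P. fscale (c q) (t q)) = (\<Sum>b\<in>G - P. - fscale (gam a b) (t b))"
        using aGP by (intro sum.cong refl) (auto simp: c_def fscale_def fun_eq_iff)
      then show ?thesis by (simp add: sum_negf)
    qed
    finally have cc: "(\<Sum>q\<in>Q. fscale (c q) (t q)) = t a + - (\<Sum>b\<in>G - P. fscale (gam a b) (t b))" .
    show ?thesis unfolding cc by (subst ta) (simp only: add.assoc add.right_inverse add_0_right)
  qed
  have MP: "(\<Sum>q\<in>Q. fscale (c q) (t q)) \<in> fs.span (t ` P)"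
    unfolding Meq by (intro fs.span_sum fs.span_scale fs.span_base) auto
  have Mnz: "(\<Sum>q\<in>Q. fscale (c q) (t q)) \<noteq> 0"
  proof
    assume "(\<Sum>q\<in>Q. fscale (c q) (t q)) = 0"
    then have z: "(\<Sum>b\<in>G \<inter> P. fscale (gam a b) (t b)) = 0" using Meq by simp
    let ?g = "\<lambda>b. if b \<in> G \<inter> P then gam a b else 0"
    have "(\<Sum>b\<in>B. fscale (?g b) (t b)) = (\<Sum>b\<in>G \<inter> P. fscale (?g b) (t b))"
      using GB by (intro sum_supp[OF fB]) auto
    also have "\<dots> = (\<Sum>b\<in>G \<inter> P. fscale (gam a b) (t b))" by (intro sum.cong) auto
    finally have "(\<Sum>b\<in>B. fscale (?g b) (t b)) = 0" using z by simp
    then have "?g b1 = 0" using indep_fam[OF fB inj ind, of ?g b1] ab P by blast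
    then show False using ab P G_def by auto
  qed
  have cnz: "\<forall>q\<in>Q. c q \<noteq> 0" using Q_def c_def G_def by auto
  have QY: "Q \<subseteq> Y" using Q_def a GB BY by auto
  have iQP: "\<forall>q\<in>Q \<union> P. indep_at j0 (w q)" using ia QY P BY by auto
  have sy: "fs.dim (u ` Q) + fs.dim (w ` Q) \<le> card Q + fs.dim (fs.span (w ` Q) \<inter> fs.span (w ` P))"
    by (rule sylv[OF fQ fP iQP cnz]) (use MP in \<open>simp add: t_def\<close>)
  have mn: "1 \<le> fs.dim (fs.span (u ` Q) \<inter> fs.span (u ` P))"
    by (rule meet_nonzero[OF fQ iQP, of c]) (use MP Mnz in \<open>simp_all add: t_def\<close>)
  have gu: "fs.dim (u ` Q \<union> u ` P) + fs.dim (fs.span (u ` Q) \<inter> fs.span (u ` P)) \<le> fs.dim (u ` Q) + fs.dim (u ` P)"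
    using grassmann fQ fP by blast
  have gw: "fs.dim (w ` Q \<union> w ` P) + fs.dim (fs.span (w ` Q) \<inter> fs.span (w ` P)) \<le> fs.dim (w ` Q) + fs.dim (w ` P)"
    using grassmann fQ fP by blast
  have PGsub: "P \<union> G \<subseteq> Q \<union> P" using Q_def by auto
  have du: "fs.dim (u ` (P \<union> G)) \<le> fs.dim (u ` Q \<union> u ` P)"
    using PGsub fQ fP by (intro dim_mono_fin) (auto intro: fs.span_base)
  have dw: "fs.dim (w ` (P \<union> G)) \<le> fs.dim (w ` Q \<union> w ` P)"
    using PGsub fQ fP by (intro dim_mono_fin) (auto intro: fs.span_base)
  show ?thesis unfolding G_def[symmetric] using sy mn gu gw du dw good cQ cPG by linarith
qed




lemma dim_empty_fs: "fs.dim ({} :: ('c \<Rightarrow> 'a::field) set) = 0"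
  using fs.dim_eq_card_independent[OF fs.independent_empty] by simp

lemma tens_nz:
  assumes "tens j0 u w \<noteq> 0"
  shows "u \<noteq> 0" "w \<noteq> 0"
  using assms by (auto simp: tens_def fun_eq_iff)

lemma D2:
  fixes j0 :: nat and u :: "'i \<Rightarrow> 'b \<Rightarrow> 'a::field" and w :: "'i \<Rightarrow> (nat \<Rightarrow> 'b) \<Rightarrow> 'a"
  assumes fY: "finite Y" and ia: "\<forall>a\<in>Y. indep_at j0 (w a)"
    and nz: "\<forall>a\<in>Y. tens j0 (u a) (w a) \<noteq> 0" and cn: "conn Y (\<lambda>a. tens j0 (u a) (w a))"
  shows "fs.dim (u ` Y) + fs.dim (w ` Y) \<le> fs.dim ((\<lambda>a. tens j0 (u a) (w a)) ` Y) + 1"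
proof (cases "Y = {}")
  case True
  then show ?thesis by (simp add: dim_empty_fs)
next
  case False
  let ?t = "\<lambda>a. tens j0 (u a) (w a)"
  obtain B where B: "B \<subseteq> Y" "inj_on ?t B" "fs.independent (?t ` B)" "fs.span (?t ` B) = fs.span (?t ` Y)"
    "fs.dim (?t ` Y) = card B"
    using basis_fam[OF fY, of ?t] by blast
  have fB: "finite B" using B(1) fY finite_subset by blast
  have iB: "\<forall>a\<in>B. indep_at j0 (w a)" using ia B(1) by auto
  have insp: "?t a \<in> fs.span (?t ` B)" if "a \<in> Y" for a
    using that B(4) fs.span_base[of "?t a" "?t ` Y"] by auto
  define gam where "gam a = (SOME \<gamma>. ?t a = (\<Sum>b\<in>B. fscale (\<gamma> b) (?t b)))" for a
  have rep: "\<forall>a\<in>Y. ?t a = (\<Sum>b\<in>B. fscale (gam a b) (?t b))"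
  proof
    fix a assume a: "a \<in> Y"
    have "\<exists>\<gamma>. ?t a = (\<Sum>b\<in>B. fscale (\<gamma> b) (?t b))"
      using span_fam[OF fB B(2) insp[OF a]] by metis
    then show "?t a = (\<Sum>b\<in>B. fscale (gam a b) (?t b))"
      unfolding gam_def by (rule someI_ex)
  qed
  have uY: "u ` Y \<subseteq> fs.span (u ` B)"
  proof
    fix v assume "v \<in> u ` Y"
    then obtain a where a: "a \<in> Y" "v = u a" by blast
    have "w a \<noteq> 0" using tens_nz nz a by blast
    then obtain i0 where i0: "w a i0 \<noteq> 0" by (auto simp: fun_eq_iff)
    have "dslice j0 i0 (?t a) \<in> fs.span (u ` B)" using dslice_span[OF insp[OF a(1)] iB] .
    then have "fscale (w a i0) (u a) \<in> fs.span (u ` B)" using dslice_tens ia a by metis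
    then have "fscale (inverse (w a i0)) (fscale (w a i0) (u a)) \<in> fs.span (u ` B)" by (rule fs.span_scale)
    then show "v \<in> fs.span (u ` B)" using i0 a by (simp add: fs.scale_scale)
  qed
  have wY: "w ` Y \<subseteq> fs.span (w ` B)"
  proof
    fix v assume "v \<in> w ` Y"
    then obtain a where a: "a \<in> Y" "v = w a" by blast
    have "u a \<noteq> 0" using tens_nz nz a by blast
    then obtain \<beta> where \<beta>: "u a \<beta> \<noteq> 0" by (auto simp: fun_eq_iff)
    have "slice j0 \<beta> (?t a) \<in> fs.span (w ` B)" using slice_span[OF insp[OF a(1)] iB] .
    then have "fscale (u a \<beta>) (w a) \<in> fs.span (w ` B)" using slice_tens ia a by metis
    then have "fscale (inverse (u a \<beta>)) (fscale (u a \<beta>) (w a)) \<in> fs.span (w ` B)" by (rule fs.span_scale)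
    then show "v \<in> fs.span (w ` B)" using \<beta> a by (simp add: fs.scale_scale)
  qed
  have duY: "fs.dim (u ` Y) \<le> fs.dim (u ` B)" using dim_mono_fin[OF uY] fB by blast
  have dwY: "fs.dim (w ` Y) \<le> fs.dim (w ` B)" using dim_mono_fin[OF wY] fB by blast
  define good where "good P \<longleftrightarrow> P \<subseteq> B \<and> P \<noteq> {} \<and> fs.dim (u ` P) + fs.dim (w ` P) \<le> card P + 1" for P
  have Bne: "B \<noteq> {}"
  proof
    assume "B = {}"
    obtain a where a: "a \<in> Y" using False by blast
    have "?t a \<in> fs.span (?t ` B)" using insp[OF a] .
    then have "?t a = 0" using \<open>B = {}\<close> by simp
    then show False using nz a by blast
  qed
  then obtain b0 where b0: "b0 \<in> B" by blast
  have "good {b0}"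
  proof -
    have "fs.dim (u ` {b0}) \<le> 1" using fs.dim_le_card'[of "u ` {b0}"] by simp
    moreover have "fs.dim (w ` {b0}) \<le> 1" using fs.dim_le_card'[of "w ` {b0}"] by simp
    ultimately show ?thesis unfolding good_def using b0 by simp
  qed
  moreover have "\<forall>y. good y \<longrightarrow> card y < Suc (card B)"
    using card_mono[OF fB] unfolding good_def less_Suc_eq_le by blast
  ultimately have "\<exists>x. good x \<and> (\<forall>y. good y \<longrightarrow> card y \<le> card x)"
    by (rule ex_has_greatest_nat)
  then obtain P where gP: "good P" and maxP: "\<And>P'. good P' \<Longrightarrow> card P' \<le> card P" by blast
  have PB: "P = B"
  proof (rule ccontr)
    assume PnB: "P \<noteq> B"
    have P: "P \<subseteq> B" "P \<noteq> {}" using gP good_def by auto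
    obtain a where a: "a \<in> Y - B" and ab1: "\<exists>b\<in>P. gam a b \<noteq> 0" and ab2: "\<exists>b\<in>B - P. gam a b \<noteq> 0"
      using straddle[OF fY B(1) B(2) B(3) rep cn P PnB] by blast
    obtain b1 where b1: "b1 \<in> P" "gam a b1 \<noteq> 0" using ab1 by blast
    obtain b2 where b2: "b2 \<in> B - P" "gam a b2 \<noteq> 0" using ab2 by blast
    let ?P' = "P \<union> {b\<in>B. gam a b \<noteq> 0}"
    have inc: "fs.dim (u ` ?P') + fs.dim (w ` ?P') \<le> card ?P' + 1"
      using increment[OF fY B(1) B(2) B(3) rep ia P(1) _ a b1] gP good_def by blast
    have "good ?P'" unfolding good_def using inc P by auto
    moreover have "card P < card ?P'"
    proof -
      have "P \<subset> ?P'" using b2 by auto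
      moreover have "finite ?P'" using fB P by (auto intro: finite_subset)
      ultimately show ?thesis by (rule psubset_card_mono[rotated])
    qed
    ultimately show False using maxP by fastforce
  qed
  then have "fs.dim (u ` B) + fs.dim (w ` B) \<le> card B + 1" using gP good_def by simp
  then show ?thesis using duY dwY B(5) by linarith
qed




declare fscale_apply[simp del]

definition tpJ :: "nat set \<Rightarrow> (nat \<Rightarrow> 'b \<Rightarrow> 'a) \<Rightarrow> (nat \<Rightarrow> 'b) \<Rightarrow> 'a::field" where
  "tpJ J f = (\<lambda>i. \<Prod>j\<in>J. f j (i j))"

lemma tpJ_insert: "finite J \<Longrightarrow> j0 \<notin> J \<Longrightarrow> tpJ (insert j0 J) f = tens j0 (f j0) (tpJ J f)"
  by (simp add: tpJ_def tens_def fun_eq_iff)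

lemma tpJ_indep: "j0 \<notin> J \<Longrightarrow> indep_at j0 (tpJ J f)"
  unfolding indep_at_def tpJ_def by (auto intro!: prod.cong)

lemma DJ:
  fixes f :: "'i \<Rightarrow> nat \<Rightarrow> 'b \<Rightarrow> 'a::field"
  assumes "finite J" and fY: "finite Y" and Yne: "Y \<noteq> {}"
  shows "(\<forall>a\<in>Y. tpJ J (f a) \<noteq> 0) \<Longrightarrow> conn Y (\<lambda>a. tpJ J (f a)) \<Longrightarrow>
    (\<Sum>j\<in>J. fs.dim ((\<lambda>a. f a j) ` Y)) + 1 \<le> fs.dim ((\<lambda>a. tpJ J (f a)) ` Y) + card J"
  using assms(1)
proof (induction J rule: finite_induct)
  case empty
  have "(\<lambda>a. tpJ {} (f a)) ` Y = {\<lambda>i. 1}" using Yne by (auto simp: tpJ_def)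
  moreover have "fs.dim {(\<lambda>i. 1) :: (nat \<Rightarrow> 'b) \<Rightarrow> 'a} = 1"
  proof -
    have "(\<lambda>i. 1) \<noteq> (0 :: (nat \<Rightarrow> 'b) \<Rightarrow> 'a)" by (simp add: fun_eq_iff)
    then have "fs.independent {(\<lambda>i. 1) :: (nat \<Rightarrow> 'b) \<Rightarrow> 'a}" using fs.dependent_single by blast
    then show ?thesis using fs.dim_eq_card_independent by fastforce
  qed
  ultimately show ?case by simp
next
  case (insert j0 J)
  let ?u = "\<lambda>a. f a j0" and ?w = "\<lambda>a. tpJ J (f a)"
  have eqf: "(\<lambda>a. tpJ (insert j0 J) (f a)) = (\<lambda>a. tens j0 (?u a) (?w a))"
    using tpJ_insert[OF insert(1,2)] by auto
  have ia: "\<forall>a\<in>Y. indep_at j0 (?w a)" using tpJ_indep[OF insert(2)] by blast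
  have nz: "\<forall>a\<in>Y. tens j0 (?u a) (?w a) \<noteq> 0" using insert(4) eqf by metis
  have cn: "conn Y (\<lambda>a. tens j0 (?u a) (?w a))" using insert(5) eqf by metis
  have nzw: "\<forall>a\<in>Y. ?w a \<noteq> 0" using nz tens_nz by blast
  have cnw: "conn Y ?w" by (rule conn_w[OF cn ia])
  have IH: "(\<Sum>j\<in>J. fs.dim ((\<lambda>a. f a j) ` Y)) + 1 \<le> fs.dim (?w ` Y) + card J"
    using insert(3)[OF nzw cnw] .
  have d2: "fs.dim (?u ` Y) + fs.dim (?w ` Y) \<le> fs.dim ((\<lambda>a. tens j0 (?u a) (?w a)) ` Y) + 1"
    by (rule D2[OF fY ia nz cn])
  have "(\<Sum>j\<in>insert j0 J. fs.dim ((\<lambda>a. f a j) ` Y)) = fs.dim (?u ` Y) + (\<Sum>j\<in>J. fs.dim ((\<lambda>a. f a j) ` Y))"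
    using insert(1,2) by simp
  moreover have "card (insert j0 J) = card J + 1" using insert(1,2) by simp
  moreover have "fs.dim ((\<lambda>a. tpJ (insert j0 J) (f a)) ` Y) = fs.dim ((\<lambda>a. tens j0 (?u a) (?w a)) ` Y)"
    by (simp only: eqf)
  ultimately show ?case using IH d2 by linarith
qed

lemma Lmin:
  fixes g :: "'i \<Rightarrow> nat \<Rightarrow> 'b \<Rightarrow> 'a::field"
  assumes fJ: "finite J" and fI: "finite I" and Ine: "I \<noteq> {}"
    and nz: "\<forall>a\<in>I. tpJ J (g a) \<noteq> 0"
    and s0: "(\<Sum>a\<in>I. tpJ J (g a)) = 0"
    and mini: "\<forall>S. S \<subseteq> I \<longrightarrow> S \<noteq> {} \<longrightarrow> S \<noteq> I \<longrightarrow> (\<Sum>a\<in>S. tpJ J (g a)) \<noteq> 0"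
  shows "(\<Sum>j\<in>J. fs.dim ((\<lambda>a. g a j) ` I)) + 2 \<le> card I + card J"
proof -
  let ?z = "\<lambda>a. tpJ J (g a)"
  have split: "(\<Sum>a\<in>I. ?z a) = (\<Sum>a\<in>S. ?z a) + (\<Sum>a\<in>I - S. ?z a)" if "S \<subseteq> I" for S
    using sum.subset_diff[OF that fI, of ?z] by (simp only: add.commute)
  have cn: "conn I ?z"
    unfolding conn_def
  proof (intro allI impI)
    fix S assume S: "S \<subseteq> I" "S \<noteq> {}" "S \<noteq> I"
    let ?v = "\<Sum>a\<in>S. ?z a"
    have v1: "?v \<in> fs.span (?z ` S)" by (intro fs.span_sum fs.span_base) auto
    have "(\<Sum>a\<in>I - S. ?z a) = - ?v" using split[OF S(1)] s0 by (simp add: eq_neg_iff_add_eq_0 add.commute)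
    moreover have "(\<Sum>a\<in>I - S. ?z a) \<in> fs.span (?z ` (I - S))" by (intro fs.span_sum fs.span_base) auto
    ultimately have "- ?v \<in> fs.span (?z ` (I - S))" by simp
    then have v2: "?v \<in> fs.span (?z ` (I - S))" using fs.span_neg by fastforce
    have "?v \<noteq> 0" using mini S by blast
    then show "fs.span (?z ` S) \<inter> fs.span (?z ` (I - S)) \<noteq> {0}" using v1 v2 by blast
  qed
  have dj: "(\<Sum>j\<in>J. fs.dim ((\<lambda>a. g a j) ` I)) + 1 \<le> fs.dim (?z ` I) + card J"
    by (rule DJ[OF fJ fI Ine nz cn])
  obtain a0 where a0: "a0 \<in> I" using Ine by blast
  have "?z ` I \<subseteq> fs.span (?z ` (I - {a0}))"
  proof
    fix v assume "v \<in> ?z ` I"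
    then obtain a where a: "a \<in> I" "v = ?z a" by blast
    show "v \<in> fs.span (?z ` (I - {a0}))"
    proof (cases "a = a0")
      case False then show ?thesis using a by (intro fs.span_base) auto
    next
      case True
      have "(\<Sum>a\<in>I. ?z a) = (\<Sum>a\<in>{a0}. ?z a) + (\<Sum>a\<in>I - {a0}. ?z a)" using split a0 by blast
      then have "?z a0 = - (\<Sum>a\<in>I - {a0}. ?z a)" using s0 by (simp add: eq_neg_iff_add_eq_0)
      moreover have "(\<Sum>a\<in>I - {a0}. ?z a) \<in> fs.span (?z ` (I - {a0}))" by (intro fs.span_sum fs.span_base) auto
      ultimately show ?thesis using True a fs.span_neg by metis
    qed
  qed
  then have "fs.dim (?z ` I) \<le> card (?z ` (I - {a0}))" using fI by (intro fs.dim_le_card) auto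
  also have "\<dots> \<le> card (I - {a0})" using fI by (intro card_image_le) auto
  also have "\<dots> = card I - 1" using a0 fI by simp
  finally have "fs.dim (?z ` I) \<le> card I - 1" .
  moreover have "card I \<ge> 1" using fI Ine by (simp add: Suc_le_eq card_gt_0_iff)
  ultimately show ?thesis using dj by linarith
qed




lemma tprod_tpJ: "tprod m z = tpJ {1..m} z"
  by (simp add: tprod_def tpJ_def)

definition negf :: "(nat \<Rightarrow> 'b \<Rightarrow> 'a) \<Rightarrow> nat \<Rightarrow> 'b \<Rightarrow> 'a::field" where
  "negf z = z(1 := (\<lambda>b. - z 1 b))"

lemma tprod_negf: "1 \<le> m \<Longrightarrow> tprod m (negf z) = - tprod m z"
proof -
  assume m: "1 \<le> m"
  have e: "{1..m} = insert 1 {2..m}" using m by auto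
  show ?thesis
    unfolding tprod_def e using m
    by (simp add: fun_eq_iff negf_def prod.insert)
qed

lemma sum_plus:
  assumes "finite A" "finite B"
  shows "(\<Sum>t\<in>Inl ` A \<union> Inr ` B. h t) = (\<Sum>a\<in>A. h (Inl a)) + (\<Sum>b\<in>B. h (Inr b))"
proof -
  have "(\<Sum>t\<in>Inl ` A \<union> Inr ` B. h t) = (\<Sum>t\<in>Inl ` A. h t) + (\<Sum>t\<in>Inr ` B. h t)"
    using assms by (intro sum.union_disjoint) auto
  also have "(\<Sum>t\<in>Inl ` A. h t) = (\<Sum>a\<in>A. h (Inl a))" by (simp add: sum.reindex)
  also have "(\<Sum>t\<in>Inr ` B. h t) = (\<Sum>b\<in>B. h (Inr b))" by (simp add: sum.reindex)
  finally show ?thesis .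
qed

lemma split_sumtype: "S = Inl ` {a. Inl a \<in> S} \<union> Inr ` {b. Inr b \<in> S}"
  by (auto simp: image_iff) (metis sum.exhaust)

lemma factor_nz:
  assumes "tprod m z \<noteq> 0" "j \<in> {1..m}"
  shows "z j \<noteq> 0"
proof
  assume "z j = 0"
  then have "tprod m z = 0" using assms(2) by (auto simp: tprod_def fun_eq_iff intro: prod_zero)
  then show False using assms(1) by simp
qed

lemma dim_pos:
  fixes X :: "('b \<Rightarrow> 'a::field) set"
  assumes "finite X" "v \<in> X" "v \<noteq> 0"
  shows "1 \<le> fs.dim X"
  using dim_ge1[OF assms(1) assms(3), of X] fs.span_base[OF assms(2)] by simp




lemma part1:
  fixes n m r rt :: nat and x y :: "nat \<Rightarrow> nat \<Rightarrow> 'b \<Rightarrow> 'a::field"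
  assumes n1: "n \<ge> 1" and m1: "m \<ge> 1"
    and px: "\<forall>a\<in>{1..n}. is_ptensor m (x a)"
    and rn: "r \<le> n"
    and hyp: "n + r \<le> (\<Sum>j\<in>{1..m}. vdim {x a j | a. a \<in> {1..n}} - 1) + 1"
    and rtr: "rt \<le> r"
    and py: "\<forall>a\<in>{1..rt}. is_ptensor m (y a)"
    and eq: "(\<Sum>a\<in>{1..n}. tprod m (x a)) = (\<Sum>a\<in>{1..rt}. tprod m (y a))"
  shows "\<exists>Q R. Q \<subseteq> {1..n} \<and> R \<subseteq> {1..rt} \<and> max 1 (card R) \<le> card Q \<and> card Q \<le> n - 1 \<and>
               (\<Sum>a\<in>Q. tprod m (x a)) = (\<Sum>a\<in>R. tprod m (y a))"
proof -
  let ?X = "\<lambda>a. tprod m (x a)" and ?Y = "\<lambda>a. tprod m (y a)"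
  define V where "V p \<longleftrightarrow> fst p \<subseteq> {1..n} \<and> snd p \<subseteq> {1..rt} \<and> fst p \<noteq> {} \<and> card (snd p) \<le> card (fst p)
     \<and> (\<Sum>a\<in>fst p. ?X a) = (\<Sum>a\<in>snd p. ?Y a)" for p
  have V0: "V ({1..n}, {1..rt})" unfolding V_def using n1 rtr rn eq by auto
  obtain p where Vp: "V p" and pmin: "\<And>p'. V p' \<Longrightarrow> card (fst p) + card (snd p) \<le> card (fst p') + card (snd p')"
    using ex_has_least_nat[of V _ "\<lambda>p. card (fst p) + card (snd p)", OF V0] by blast
  obtain Q R where pQR: "p = (Q, R)" by (cases p)
  have Q: "Q \<subseteq> {1..n}" "Q \<noteq> {}" and R: "R \<subseteq> {1..rt}" and cRQ: "card R \<le> card Q"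
    and eQR: "(\<Sum>a\<in>Q. ?X a) = (\<Sum>a\<in>R. ?Y a)" using Vp pQR V_def by auto
  have fQ: "finite Q" and fR: "finite R" using Q R finite_subset by auto
  have cQ1: "1 \<le> card Q" using fQ Q(2) by (simp add: Suc_le_eq card_gt_0_iff)
  show ?thesis
  proof (cases "card Q \<le> n - 1")
    case True
    then show ?thesis using Q R cRQ cQ1 eQR by (intro exI[of _ Q] exI[of _ R]) auto
  next
    case False
    then have Qn: "Q = {1..n}" using Q(1) card_subset_eq[of "{1..n}" Q] card_mono[of "{1..n}" Q] by fastforce
    have cRn: "card R \<le> n" using cRQ Qn by simp
    define g :: "nat + nat \<Rightarrow> nat \<Rightarrow> 'b \<Rightarrow> 'a" where "g t = (case t of Inl a \<Rightarrow> x a | Inr b \<Rightarrow> negf (y b))" for t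
    define I where "I = Inl ` {1..n} \<union> Inr ` R"
    have tg: "tprod m (g t) = (case t of Inl a \<Rightarrow> ?X a | Inr b \<Rightarrow> - ?Y b)" for t
      by (cases t) (auto simp: g_def tprod_negf[OF m1])
    have sumI: "(\<Sum>t\<in>Inl ` A \<union> Inr ` B. tprod m (g t)) = (\<Sum>a\<in>A. ?X a) - (\<Sum>b\<in>B. ?Y b)"
      if "finite A" "finite B" for A B
      using sum_plus[OF that, of "\<lambda>t. tprod m (g t)"] by (simp add: tg sum_negf)
    have fI: "finite I" using I_def fR by auto
    have Ine: "I \<noteq> {}" using I_def n1 by auto
    have nz: "\<forall>t\<in>I. tprod m (g t) \<noteq> 0"
      using px py R unfolding I_def is_ptensor_def by (auto simp: tg)
    have s0: "(\<Sum>t\<in>I. tprod m (g t)) = 0" using sumI[of "{1..n}" R] fR eQR Qn I_def by simp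
    have mini: "\<forall>S. S \<subseteq> I \<longrightarrow> S \<noteq> {} \<longrightarrow> S \<noteq> I \<longrightarrow> (\<Sum>t\<in>S. tprod m (g t)) \<noteq> 0"
    proof (intro allI impI notI)
      fix S assume S: "S \<subseteq> I" "S \<noteq> {}" "S \<noteq> I" and zS: "(\<Sum>t\<in>S. tprod m (g t)) = 0"
      define Q' where "Q' = {a. Inl a \<in> S}"
      define R' where "R' = {b. Inr b \<in> S}"
      have SQR: "S = Inl ` Q' \<union> Inr ` R'" unfolding Q'_def R'_def by (rule split_sumtype)
      have Q'n: "Q' \<subseteq> {1..n}" and R'R: "R' \<subseteq> R" using S(1) unfolding Q'_def R'_def I_def by auto
      have fQ': "finite Q'" and fR': "finite R'" using Q'n R'R fR finite_subset by auto
      have e1: "(\<Sum>a\<in>Q'. ?X a) = (\<Sum>b\<in>R'. ?Y b)" using zS sumI[OF fQ' fR'] SQR by simp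
      have e2: "(\<Sum>a\<in>{1..n} - Q'. ?X a) = (\<Sum>b\<in>R - R'. ?Y b)"
      proof -
        have "(\<Sum>a\<in>{1..n}. ?X a) = (\<Sum>a\<in>{1..n} - Q'. ?X a) + (\<Sum>a\<in>Q'. ?X a)"
          using sum.subset_diff[OF Q'n] by simp
        moreover have "(\<Sum>b\<in>R. ?Y b) = (\<Sum>b\<in>R - R'. ?Y b) + (\<Sum>b\<in>R'. ?Y b)"
          using sum.subset_diff[OF R'R fR] by simp
        ultimately show ?thesis using eQR Qn e1 by simp
      qed
      have cR'': "card R' + card (R - R') = card R" using card_Diff_subset[OF fR' R'R] card_mono[OF fR R'R] by simp
      have cQ'': "card Q' + card ({1..n} - Q') = n" using card_Diff_subset[OF fQ' Q'n] card_mono[OF _ Q'n] by simp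
      have mp: "card Q + card R = n + card R" using Qn by simp
      show False
      proof (cases "Q' = {}")
        case True
        then have "R' \<noteq> {}" using S(2) SQR by auto
        then have "card R' > 0" using fR' by (simp add: card_gt_0_iff)
        have "V ({1..n}, R - R')" unfolding V_def using n1 R cRn e2 True cR'' by auto
        then have "card Q + card R \<le> n + card (R - R')" using pmin pQR by fastforce
        then show False using cR'' \<open>card R' > 0\<close> mp by linarith
      next
        case Q'ne: False
        show False
        proof (cases "Q' = {1..n}")
          case True
          then have "R' \<noteq> R" using S(3) SQR I_def by auto
          then have "card (R - R') > 0" using R'R fR by (metis Diff_eq_empty_iff card_gt_0_iff finite_Diff subset_antisym)
          have "V ({1..n}, R')" unfolding V_def using n1 R R'R cRn e1 True cR'' by auto
          then have "card Q + card R \<le> n + card R'" using pmin pQR by fastforce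
          then show False using cR'' \<open>card (R - R') > 0\<close> mp by linarith
        next
          case False
          have Q'le: "card Q' \<le> n" using card_mono[OF _ Q'n] by simp
          have Q'ne2: "card Q' \<noteq> n" using False Q'n card_subset_eq[of "{1..n}" Q'] by auto
          have Q'lt: "card Q' < n" using Q'le Q'ne2 by linarith
          have Q''ne: "{1..n} - Q' \<noteq> {}" using False Q'n by auto
          have "card Q' > 0" using Q'ne fQ' by (simp add: card_gt_0_iff)
          then have Q''lt: "card ({1..n} - Q') < n" using cQ'' by linarith
          show False
          proof (cases "card R' \<le> card Q'")
            case True
            have "V (Q', R')" unfolding V_def using Q'n R'R R Q'ne True e1 by auto
            then have "card Q + card R \<le> card Q' + card R'" using pmin pQR by fastforce
            then show False using Q'lt cR'' mp by linarith
          next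
            case False
            then have le: "card (R - R') \<le> card ({1..n} - Q')" using cR'' cQ'' cRn by linarith
            have "V ({1..n} - Q', R - R')" unfolding V_def using R Q''ne le e2 by auto
            then have "card Q + card R \<le> card ({1..n} - Q') + card (R - R')" using pmin pQR by fastforce
            then show False using Q''lt cR'' mp by linarith
          qed
        qed
      qed
    qed
    have L: "(\<Sum>j\<in>{1..m}. fs.dim ((\<lambda>t. g t j) ` I)) + 2 \<le> card I + card {1..m}"
      using Lmin[of "{1..m}" I g] fI Ine nz s0 mini by (simp add: tprod_tpJ)
    have cI: "card I = n + card R"
    proof -
      have "card I = card (Inl ` {1..n} :: (nat + nat) set) + card (Inr ` R :: (nat + nat) set)" unfolding I_def
        by (rule card_Un_disjoint) (use fR in auto)
      then show ?thesis by (simp add: card_image)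
    qed
    define d where "d j = vdim {x a j | a. a \<in> {1..n}}" for j
    have dle: "d j \<le> fs.dim ((\<lambda>t. g t j) ` I)" for j
    proof -
      have "{x a j | a. a \<in> {1..n}} \<subseteq> (\<lambda>t. g t j) ` I" unfolding I_def g_def by force
      then have "{x a j | a. a \<in> {1..n}} \<subseteq> fs.span ((\<lambda>t. g t j) ` I)" using fs.span_superset by blast
      then show ?thesis unfolding d_def vdim_fs using fI by (intro dim_mono_fin) auto
    qed
    have d1: "1 \<le> d j" if "j \<in> {1..m}" for j
    proof -
      have "x 1 j \<noteq> 0" using factor_nz[OF _ that, of "x 1"] px n1 unfolding is_ptensor_def by auto
      moreover have "x 1 j \<in> {x a j | a. a \<in> {1..n}}" using n1 by auto
      moreover have "finite {x a j | a. a \<in> {1..n}}" by simp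
      ultimately show ?thesis unfolding d_def vdim_fs by (intro dim_pos) auto
    qed
    have "(\<Sum>j\<in>{1..m}. d j - 1) + m = (\<Sum>j\<in>{1..m}. d j)"
    proof -
      have "(\<Sum>j\<in>{1..m}. d j - 1) + (\<Sum>j\<in>{1..m}. (1::nat)) = (\<Sum>j\<in>{1..m}. d j - 1 + 1)"
        by (rule sum.distrib[symmetric])
      also have "\<dots> = (\<Sum>j\<in>{1..m}. d j)"
      proof (rule sum.cong)
        fix j assume "j \<in> {1..m}"
        then have "1 \<le> d j" by (rule d1)
        then show "d j - 1 + 1 = d j" by simp
      qed simp
      finally show ?thesis by simp
    qed
    moreover have "(\<Sum>j\<in>{1..m}. d j) \<le> (\<Sum>j\<in>{1..m}. fs.dim ((\<lambda>t. g t j) ` I))" by (intro sum_mono dle)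
    moreover have "n + r \<le> (\<Sum>j\<in>{1..m}. d j - 1) + 1" using hyp unfolding d_def .
    moreover have "card R \<le> r" using card_mono[OF _ R] rtr by simp
    ultimately show ?thesis using L cI by simp
  qed
qed




lemma trank_le:
  fixes h :: "'i \<Rightarrow> nat \<Rightarrow> 'b \<Rightarrow> 'a::field"
  assumes fA: "finite A" and p: "\<forall>a\<in>A. is_ptensor m (h a)"
  shows "trank m (\<Sum>a\<in>A. tprod m (h a)) \<le> card A"
proof -
  obtain \<sigma> where \<sigma>: "bij_betw \<sigma> {1..card A} A" using ex_bij_betw_nat_finite_1[OF fA] by blast
  let ?y = "\<lambda>k. h (\<sigma> k)"
  have "(\<Sum>a\<in>A. tprod m (h a)) = (\<Sum>k\<in>{1..card A}. tprod m (?y k))"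
    using sum.reindex_bij_betw[OF \<sigma>, of "\<lambda>a. tprod m (h a)"] by simp
  moreover have "\<forall>k\<in>{1..card A}. is_ptensor m (?y k)" using p \<sigma> bij_betwE by blast
  ultimately have "\<exists>y :: nat \<Rightarrow> nat \<Rightarrow> 'b \<Rightarrow> 'a. (\<forall>a\<in>{1..card A}. is_ptensor m (y a)) \<and>
      (\<Sum>a\<in>A. tprod m (h a)) = (\<Sum>a\<in>{1..card A}. tprod m (y a))" by metis
  then show ?thesis unfolding trank_def by (rule Least_le)
qed

lemma trank_wit:
  fixes x :: "nat \<Rightarrow> nat \<Rightarrow> 'b \<Rightarrow> 'a::field"
  assumes "\<forall>a\<in>{1..n}. is_ptensor m (x a)"
  shows "\<exists>y :: nat \<Rightarrow> nat \<Rightarrow> 'b \<Rightarrow> 'a. (\<forall>a\<in>{1..trank m (\<Sum>a\<in>{1..n}. tprod m (x a))}. is_ptensor m (y a)) \<and>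
      (\<Sum>a\<in>{1..n}. tprod m (x a)) = (\<Sum>a\<in>{1..trank m (\<Sum>a\<in>{1..n}. tprod m (x a))}. tprod m (y a))"
proof -
  have "\<exists>y :: nat \<Rightarrow> nat \<Rightarrow> 'b \<Rightarrow> 'a. (\<forall>a\<in>{1..n}. is_ptensor m (y a)) \<and>
      (\<Sum>a\<in>{1..n}. tprod m (x a)) = (\<Sum>a\<in>{1..n}. tprod m (y a))" using assms by blast
  then show ?thesis unfolding trank_def by (rule LeastI)
qed




lemma part2:
  fixes n m r :: nat and x :: "nat \<Rightarrow> nat \<Rightarrow> 'b \<Rightarrow> 'a::field"
  assumes n2: "n \<ge> 2" and m2: "m \<ge> 2"
    and px: "\<forall>a\<in>{1..n}. is_ptensor m (x a)"
    and rn: "r \<le> n"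
    and hyp: "n + r \<le> (\<Sum>j\<in>{1..m}. vdim {x a j | a. a \<in> {1..n}} - 1) + 1"
    and h1: "1 \<le> trank m (\<Sum>a\<in>{1..n}. tprod m (x a))"
    and h2: "trank m (\<Sum>a\<in>{1..n}. tprod m (x a)) \<le> min r (n - 1)"
  shows "\<exists>S. S \<subseteq> {1..n} \<and> trank m (\<Sum>a\<in>{1..n}. tprod m (x a)) \<le> card S \<and>
               card S \<le> n - 1 \<and>
               trank m (\<Sum>a\<in>S. tprod m (x a)) < trank m (\<Sum>a\<in>{1..n}. tprod m (x a))"
proof -
  let ?X = "\<lambda>a. tprod m (x a)"
  define rt where "rt = trank m (\<Sum>a\<in>{1..n}. ?X a)"
  obtain y :: "nat \<Rightarrow> nat \<Rightarrow> 'b \<Rightarrow> 'a" where py: "\<forall>a\<in>{1..rt}. is_ptensor m (y a)"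
    and ey: "(\<Sum>a\<in>{1..n}. ?X a) = (\<Sum>a\<in>{1..rt}. tprod m (y a))"
    using trank_wit[OF px] unfolding rt_def by blast
  let ?Y = "\<lambda>a. tprod m (y a)"
  have rt1: "1 \<le> rt" and rtr: "rt \<le> r" and rtn: "rt \<le> n - 1" using h1 h2 rt_def by auto
  obtain Q R where Q: "Q \<subseteq> {1..n}" and R: "R \<subseteq> {1..rt}" and cQR: "max 1 (card R) \<le> card Q"
    and cQn: "card Q \<le> n - 1" and eQR: "(\<Sum>a\<in>Q. ?X a) = (\<Sum>a\<in>R. ?Y a)"
    using part1[OF _ _ px rn hyp rtr py ey] n2 m2 by auto
  have fQ: "finite Q" and fR: "finite R" using Q R finite_subset by auto
  have cRrt: "card R \<le> rt" using card_mono[OF _ R] by simp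
  have "\<exists>Q0 R0. Q0 \<subseteq> {1..n} \<and> R0 \<subseteq> {1..rt} \<and> card R0 < rt \<and> card R0 < card Q0 \<and> card Q0 \<le> n - 1 \<and>
      (\<Sum>a\<in>Q0. ?X a) = (\<Sum>a\<in>R0. ?Y a)"
  proof (cases "card R < card Q \<and> card R < rt")
    case True
    then show ?thesis using Q R cQn eQR by blast
  next
    case False
    have cR1: "1 \<le> card R" using False cQR rt1 cRrt by auto
    have e: "(\<Sum>a\<in>{1..n} - Q. ?X a) = (\<Sum>a\<in>{1..rt} - R. ?Y a)"
    proof -
      have "(\<Sum>a\<in>{1..n}. ?X a) = (\<Sum>a\<in>{1..n} - Q. ?X a) + (\<Sum>a\<in>Q. ?X a)"
        using sum.subset_diff[OF Q] by simp
      moreover have "(\<Sum>a\<in>{1..rt}. ?Y a) = (\<Sum>a\<in>{1..rt} - R. ?Y a) + (\<Sum>a\<in>R. ?Y a)"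
        using sum.subset_diff[OF R] by simp
      ultimately show ?thesis using ey eQR by simp
    qed
    have c1: "card ({1..n} - Q) = n - card Q" using card_Diff_subset[OF fQ Q] by simp
    have c2: "card ({1..rt} - R) = rt - card R" using card_Diff_subset[OF fR R] by simp
    have "card ({1..rt} - R) < rt" using c2 cR1 rt1 by linarith
    moreover have "card ({1..rt} - R) < card ({1..n} - Q)" using c1 c2 False cQR cRrt rtn cQn n2 by auto
    moreover have "card ({1..n} - Q) \<le> n - 1" using c1 cQR by auto
    ultimately show ?thesis using e by (intro exI[of _ "{1..n} - Q"] exI[of _ "{1..rt} - R"]) auto
  qed
  then obtain Q0 R0 where Q0: "Q0 \<subseteq> {1..n}" and R0: "R0 \<subseteq> {1..rt}" and c0: "card R0 < rt" "card R0 < card Q0"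
    "card Q0 \<le> n - 1" and e0: "(\<Sum>a\<in>Q0. ?X a) = (\<Sum>a\<in>R0. ?Y a)" by blast
  have fQ0: "finite Q0" and fR0: "finite R0" using Q0 R0 finite_subset by auto
  have "rt - card Q0 \<le> card ({1..n} - Q0)" using card_Diff_subset[OF fQ0 Q0] card_mono[OF _ Q0] rtn by simp
  then obtain P where P: "P \<subseteq> {1..n} - Q0" "card P = rt - card Q0" "finite P"
    by (rule obtain_subset_with_card_n)
  define S where "S = Q0 \<union> P"
  have SD: "Q0 \<inter> P = {}" using P by auto
  have cS: "card S = card Q0 + card P" unfolding S_def using card_Un_disjoint[OF fQ0 P(3) SD] .
  have Sn: "S \<subseteq> {1..n}" using S_def Q0 P by auto
  define hh :: "nat + nat \<Rightarrow> nat \<Rightarrow> 'b \<Rightarrow> 'a" where "hh t = (case t of Inl a \<Rightarrow> y a | Inr a \<Rightarrow> x a)" for t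
  have "(\<Sum>a\<in>S. ?X a) = (\<Sum>a\<in>Q0. ?X a) + (\<Sum>a\<in>P. ?X a)"
    unfolding S_def using fQ0 P(3) SD by (rule sum.union_disjoint)
  also have "\<dots> = (\<Sum>a\<in>R0. tprod m (hh (Inl a))) + (\<Sum>a\<in>P. tprod m (hh (Inr a)))" using e0 by (simp add: hh_def)
  also have "\<dots> = (\<Sum>t\<in>Inl ` R0 \<union> Inr ` P. tprod m (hh t))" by (rule sum_plus[OF fR0 P(3), of "\<lambda>t. tprod m (hh t)", symmetric])
  finally have sS: "(\<Sum>a\<in>S. ?X a) = (\<Sum>t\<in>Inl ` R0 \<union> Inr ` P. tprod m (hh t))" .
  have phh: "\<forall>t\<in>Inl ` R0 \<union> Inr ` P. is_ptensor m (hh t)" using py px R0 P(1) by (auto simp: hh_def)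
  have "trank m (\<Sum>a\<in>S. ?X a) \<le> card (Inl ` R0 \<union> Inr ` P :: (nat + nat) set)"
    unfolding sS using phh fR0 P(3) by (intro trank_le) auto
  also have "\<dots> = card (Inl ` R0 :: (nat + nat) set) + card (Inr ` P :: (nat + nat) set)"
    by (rule card_Un_disjoint) (use fR0 P(3) in auto)
  also have "\<dots> = card R0 + card P" by (simp add: card_image)
  finally have tS: "trank m (\<Sum>a\<in>S. ?X a) \<le> card R0 + card P" .
  have "trank m (\<Sum>a\<in>S. ?X a) < rt" using tS P(2) c0 by linarith
  moreover have "rt \<le> card S" using cS P(2) by linarith
  moreover have "card S \<le> n - 1" using cS P(2) c0 rtn by linarith
  ultimately show ?thesis using Sn rt_def by blast
qed

theorem corollary7p7:
  fixes n m r :: nat and x :: "nat \<Rightarrow> nat \<Rightarrow> 'b \<Rightarrow> 'a::field"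
  assumes "n \<ge> 2" and "m \<ge> 2"
    and "\<forall>a\<in>{1..n}. is_ptensor m (x a)"
    and "r \<le> n"
    and "n + r \<le> (\<Sum>j\<in>{1..m}. vdim {x a j | a. a \<in> {1..n}} - 1) + 1"
  shows "(\<forall>rt (y :: nat \<Rightarrow> nat \<Rightarrow> 'b \<Rightarrow> 'a). rt \<le> r \<longrightarrow>
            (\<forall>a\<in>{1..rt}. is_ptensor m (y a)) \<longrightarrow>
            (\<Sum>a\<in>{1..n}. tprod m (x a)) = (\<Sum>a\<in>{1..rt}. tprod m (y a)) \<longrightarrow>
            (\<exists>Q R. Q \<subseteq> {1..n} \<and> R \<subseteq> {1..rt} \<and>
               max 1 (card R) \<le> card Q \<and> card Q \<le> n - 1 \<and>
               (\<Sum>a\<in>Q. tprod m (x a)) = (\<Sum>a\<in>R. tprod m (y a))))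
       \<and> (1 \<le> trank m (\<Sum>a\<in>{1..n}. tprod m (x a)) \<and>
          trank m (\<Sum>a\<in>{1..n}. tprod m (x a)) \<le> min r (n - 1) \<longrightarrow>
          (\<exists>S. S \<subseteq> {1..n} \<and> trank m (\<Sum>a\<in>{1..n}. tprod m (x a)) \<le> card S \<and>
               card S \<le> n - 1 \<and>
               trank m (\<Sum>a\<in>S. tprod m (x a)) < trank m (\<Sum>a\<in>{1..n}. tprod m (x a))))"
proof (intro conjI allI impI)
  fix rt and y :: "nat \<Rightarrow> nat \<Rightarrow> 'b \<Rightarrow> 'a"
  assume "rt \<le> r" "\<forall>a\<in>{1..rt}. is_ptensor m (y a)"
    "(\<Sum>a\<in>{1..n}. tprod m (x a)) = (\<Sum>a\<in>{1..rt}. tprod m (y a))"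
  then show "\<exists>Q R. Q \<subseteq> {1..n} \<and> R \<subseteq> {1..rt} \<and>
               max 1 (card R) \<le> card Q \<and> card Q \<le> n - 1 \<and>
               (\<Sum>a\<in>Q. tprod m (x a)) = (\<Sum>a\<in>R. tprod m (y a))"
    using part1[of n m x r rt y] assms by auto
next
  assume "1 \<le> trank m (\<Sum>a\<in>{1..n}. tprod m (x a)) \<and>
          trank m (\<Sum>a\<in>{1..n}. tprod m (x a)) \<le> min r (n - 1)"
  then show "\<exists>S. S \<subseteq> {1..n} \<and> trank m (\<Sum>a\<in>{1..n}. tprod m (x a)) \<le> card S \<and>
               card S \<le> n - 1 \<and>
               trank m (\<Sum>a\<in>S. tprod m (x a)) < trank m (\<Sum>a\<in>{1..n}. tprod m (x a))"
    using part2[OF assms] by blast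
qed


end
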